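(* In any execution of the algorithm described in the context, in every round $r>0$ non-faulty processes only sign and broadcast AUX messages whose binary value was proposed by some non-faulty process.
   Context: Model. There are $n$ processes $p_1,\dots,p_n$ ($i$ is the index of $p_i$) communicating over an asynchronous, reliable, point-to-point network: every pair of processes is connected by a channel, message delays are finite but unbounded, and the network does not lose, duplicate, modify or create messages. "Broadcast" means sending the message to every process (including oneself). Messages are signed with unforgeable digital signatures ($\langle m\rangle_j$ denotes message $m$ signed by $p_j$); malformed messages or messages with invalid signatures are ignored. Up to $t$ processes are Byzantine (faulty) and may behave arbitrarily and collude, but cannot forge signatures of other processes; the remaining processes are non-faulty and follow the algorithm. It is assumed that $t<n/3$. Each non-faulty process $p_i$ starts with a proposal $v_i\in\{0,1\}$. Algorithm. Messages are of the form $\mathrm{AUX}[r](v)$ with round $r\in\mathbb{N}$ and $v\in\{0,1\}$, sent as a pair $(\langle \mathrm{AUX}[r](v)\rangle_j,\mathit{proofs})$ where $\mathit{proofs}$ is a set of signed AUX messages. The predicate $\mathsf{is\_valid}(r,est,\mathit{proofs})$ is: if $r=0$ return true; if $r=1$ return true iff $\mathit{proofs}$ contains signed $\mathrm{AUX}[0](est)$ messages from $t+1$ different processes; otherwise let $b=(r-1)\bmod 2$; if $est=b$, return true iff ($r=2$ and $\mathit{proofs}$ contains signed $\mathrm{AUX}[0](b)$ from $t+1$ different processes) or ($\mathit{proofs}$ contains signed $\mathrm{AUX}[r-2](b)$ from $n-t$ different processes); if $est\neq b$, return true iff $\mathit{proofs}$ contains signed $\mathrm{AUX}[r-1](\neg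 b)$ from $n-t$ different processes. Each process $p_i$ with proposal $v_i$ keeps a round counter $r_i$, a set $\mathit{aux\_values}_i$ of signed AUX messages, and timers indexed by naturals (timers $2r$ and $2r+1$ belong to round $r$; starting an already started or expired timer does nothing). It sets $r_i:=0$, $\mathit{aux\_values}_i:=\emptyset$, broadcasts $(\langle\mathrm{AUX}[0](v_i)\rangle_i,\emptyset)$, then repeats forever: (1) $r_i:=r_i+1$; (2) if $i=r_i\bmod n$ (coordinator), run Broadcast; (3) start timer $2r_i$ and wait until it expires; (4) if $i\ne r_i\bmod n$, run Broadcast; (5) wait until $\mathit{aux\_values}_i$ contains round-$r_i$ AUX messages from $n-t$ different processes; (6) start timer $2r_i+1$ and wait until it expires; (7) with $b_i=r_i\bmod 2$, if $\mathit{aux\_values}_i$ contains $\mathrm{AUX}[r_i](b_i)$ from $n-t$ different processes, decide $b_i$ (if not yet decided). Broadcast: let $\mathit{values}_i$ be the set of $v\in\{0,1\}$ such that $\mathsf{is\_valid}(r_i,v,S)$ holds for some $S\subseteq\mathit{aux\_values}_i$; let $bv=(r_i+1)\bmod 2$; if $p_i$ received from $p_{r_i\bmod n}$ a message $(\langle\mathrm{AUX}[r_i](p)\rangle_{r_i\bmod n},\cdot)$ with $p\in\mathit{values}_i$ then $est_i:=p$, else if $bv\in\mathit{values}_i$ then $est_i:=bv$, else $est_i:=\neg bv$; choose $\mathit{proofs}\subseteq\mathit{aux\_values}_i$ with $\mathsf{is\_valid}(r_i,est_i,\mathit{proofs})$ and broadcast $(\langle\mathrm{AUX}[r_i](est_i)\rangle_i,\mathit{proofs})$.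 On receiving $(\langle\mathrm{AUX}[r_j](est_j)\rangle_j,\mathit{proofs})$: if $\mathsf{is\_valid}(r_j,est_j,\mathit{proofs})$, add the signed message and the messages of $\mathit{proofs}$ needed to satisfy the predicate to $\mathit{aux\_values}_i$ (such messages are called valid). Then let $\rho_i$ be the largest round for which $\mathit{aux\_values}_i$ contains messages from $t+1$ different processes, and set every timer with index $\le 2\rho_i$ to expired. *)

theory Defs
  imports Main
begin

text \<open>Processes are indexed 0,...,n-1 (so that the coordinator of round r is
the process with index r mod n).  Binary values: False = 0, True = 1.\<close>

type_synonym smsg = "nat \<times> nat \<times> bool"
  \<comment> \<open>(j, r, v) is the signed message AUX[r](v) signed by process j\<close>
type_synonym nmsg = "smsg \<times> smsg set"
  \<comment> \<open>a pair (signed AUX message, proofs)\<close>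
type_synonym packet = "nat \<times> nat \<times> nmsg"
  \<comment> \<open>(source, destination, message) on a point-to-point channel\<close>

definition bit_of :: "nat \<Rightarrow> bool" where
  "bit_of k = (k mod 2 = 1)"

definition signers :: "smsg set \<Rightarrow> nat \<Rightarrow> bool \<Rightarrow> nat set" where
  "signers S r v = {j. (j, r, v) \<in> S}"

definition round_signers :: "smsg set \<Rightarrow> nat \<Rightarrow> nat set" where
  "round_signers S r = {j. \<exists>v. (j, r, v) \<in> S}"

definition is_valid :: "nat \<Rightarrow> nat \<Rightarrow> nat \<Rightarrow> bool \<Rightarrow> smsg set \<Rightarrow> bool" where
  "is_valid n t r est proofs =
     (if r = 0 then True
      else if r = 1 then card (signers proofs 0 est) \<ge> t + 1
      else (let b = bit_of (r - 1) in
            if est = b then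
              (r = 2 \<and> card (signers proofs 0 b) \<ge> t + 1)
              \<or> card (signers proofs (r - 2) b) \<ge> n - t
            else card (signers proofs (r - 1) (\<not> b)) \<ge> n - t))"

datatype pcs = Init | Loop | Wait1 | Wait2 | Wait3
  \<comment> \<open>Init: before the initial broadcast; Loop: about to execute step (1);
      Wait1: waiting for timer 2r (step 3); Wait2: step (5); Wait3: timer 2r+1 (step 6)\<close>

record lstate =
  rnd :: nat
  pc :: pcs
  auxv :: "smsg set"
  started :: "nat set"
  expired :: "nat set"
  decided :: "bool option"
  rcvd :: "packet set"

record config =
  loc :: "nat \<Rightarrow> lstate"
  net :: "packet set"    \<comment> \<open>packets in transit\<close>
  sent :: "packet set"   \<comment> \<open>all packets ever sent\<close>

definition init_lstate :: lstate where
  "init_lstate = \<lparr>rnd = 0, pc = Init, auxv = {}, started = {}, expired = {},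
                  decided = None, rcvd = {}\<rparr>"

definition init_config :: config where
  "init_config = \<lparr>loc = (\<lambda>_. init_lstate), net = {}, sent = {}\<rparr>"

definition known_sigs :: "config \<Rightarrow> smsg set" where
  "known_sigs c = (\<Union>(src, dst, m, P) \<in> sent c. insert m P)"

definition upd_loc :: "config \<Rightarrow> nat \<Rightarrow> lstate \<Rightarrow> config" where
  "upd_loc c i s = c\<lparr>loc := (loc c)(i := s)\<rparr>"

definition send :: "config \<Rightarrow> packet set \<Rightarrow> config" where
  "send c ps = c\<lparr>net := net c \<union> ps, sent := sent c \<union> ps\<rparr>"

definition bcast_pkts :: "nat \<Rightarrow> nat \<Rightarrow> nat \<Rightarrow> bool \<Rightarrow> smsg set \<Rightarrow> packet set" where
  "bcast_pkts n i r est prf = {(i, j, ((i, r, est), prf)) | j. j < n}"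

definition bvalues :: "nat \<Rightarrow> nat \<Rightarrow> lstate \<Rightarrow> bool set" where
  "bvalues n t s = {v. \<exists>S \<subseteq> auxv s. is_valid n t (rnd s) v S}"

definition coord_vals :: "nat \<Rightarrow> nat \<Rightarrow> lstate \<Rightarrow> bool set" where
  "coord_vals n t s = {p. p \<in> bvalues n t s \<and>
      (\<exists>d prf. (rnd s mod n, d, ((rnd s mod n, rnd s, p), prf)) \<in> rcvd s)}"

text \<open>Admissible choices (est, proofs) of procedure Broadcast in local state s
(the choice is nondeterministic where the informal description leaves it open).\<close>
definition bcast_ok :: "nat \<Rightarrow> nat \<Rightarrow> lstate \<Rightarrow> bool \<Rightarrow> smsg set \<Rightarrow> bool" where
  "bcast_ok n t s est prf =
     ((if coord_vals n t s \<noteq> {} then est \<in> coord_vals n t s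
       else if bit_of (rnd s + 1) \<in> bvalues n t s then est = bit_of (rnd s + 1)
       else est = (\<not> bit_of (rnd s + 1)))
      \<and> prf \<subseteq> auxv s \<and> finite prf \<and> is_valid n t (rnd s) est prf)"

definition forced_expired :: "nat \<Rightarrow> smsg set \<Rightarrow> nat set" where
  "forced_expired t S = {k. \<exists>\<rho>. card (round_signers S \<rho>) \<ge> t + 1 \<and> k \<le> 2 * \<rho>}"

inductive step :: "nat \<Rightarrow> nat \<Rightarrow> nat set \<Rightarrow> (nat \<Rightarrow> bool) \<Rightarrow> config \<Rightarrow> config \<Rightarrow> bool"
  for n t F prp where
  init_step: "\<lbrakk> i < n; i \<notin> F; pc (loc c i) = Init \<rbrakk> \<Longrightarrow>
     step n t F prp c
       (send (upd_loc c i ((loc c i)\<lparr>rnd := 0, auxv := {}, pc := Loop\<rparr>))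
             (bcast_pkts n i 0 (prp i) {}))"
| loop_coord: "\<lbrakk> i < n; i \<notin> F; pc (loc c i) = Loop;
     s1 = (loc c i)\<lparr>rnd := Suc (rnd (loc c i))\<rparr>; i = rnd s1 mod n;
     bcast_ok n t s1 est prf \<rbrakk> \<Longrightarrow>
     step n t F prp c
       (send (upd_loc c i (s1\<lparr>started := insert (2 * rnd s1) (started s1), pc := Wait1\<rparr>))
             (bcast_pkts n i (rnd s1) est prf))"
| loop_other: "\<lbrakk> i < n; i \<notin> F; pc (loc c i) = Loop;
     s1 = (loc c i)\<lparr>rnd := Suc (rnd (loc c i))\<rparr>; i \<noteq> rnd s1 mod n \<rbrakk> \<Longrightarrow>
     step n t F prp c
       (upd_loc c i (s1\<lparr>started := insert (2 * rnd s1) (started s1), pc := Wait1\<rparr>))"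
| wait1_coord: "\<lbrakk> i < n; i \<notin> F; pc (loc c i) = Wait1; 2 * rnd (loc c i) \<in> expired (loc c i);
     i = rnd (loc c i) mod n \<rbrakk> \<Longrightarrow>
     step n t F prp c (upd_loc c i ((loc c i)\<lparr>pc := Wait2\<rparr>))"
| wait1_other: "\<lbrakk> i < n; i \<notin> F; pc (loc c i) = Wait1; 2 * rnd (loc c i) \<in> expired (loc c i);
     i \<noteq> rnd (loc c i) mod n; bcast_ok n t (loc c i) est prf \<rbrakk> \<Longrightarrow>
     step n t F prp c
       (send (upd_loc c i ((loc c i)\<lparr>pc := Wait2\<rparr>))
             (bcast_pkts n i (rnd (loc c i)) est prf))"
| wait2: "\<lbrakk> i < n; i \<notin> F; pc (loc c i) = Wait2;
     card (round_signers (auxv (loc c i)) (rnd (loc c i))) \<ge> n - t \<rbrakk> \<Longrightarrow>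
     step n t F prp c
       (upd_loc c i ((loc c i)\<lparr>started := insert (2 * rnd (loc c i) + 1) (started (loc c i)),
                                pc := Wait3\<rparr>))"
| wait3: "\<lbrakk> i < n; i \<notin> F; pc (loc c i) = Wait3; 2 * rnd (loc c i) + 1 \<in> expired (loc c i);
     s = loc c i; b = bit_of (rnd s) \<rbrakk> \<Longrightarrow>
     step n t F prp c
       (upd_loc c i (s\<lparr>decided :=
           (if card (signers (auxv s) (rnd s) b) \<ge> n - t \<and> decided s = None
            then Some b else decided s), pc := Loop\<rparr>))"
| timer_expire: "\<lbrakk> i < n; i \<notin> F; k \<in> started (loc c i) \<rbrakk> \<Longrightarrow>
     step n t F prp c
       (upd_loc c i ((loc c i)\<lparr>expired := insert k (expired (loc c i))\<rparr>))"
| receive_valid: "\<lbrakk> i < n; i \<notin> F; pc (loc c i) \<noteq> Init;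
     (src, i, ((j, r, v), prf)) \<in> net c; is_valid n t r v prf;
     P \<subseteq> prf; is_valid n t r v P;
     s = loc c i; A = auxv s \<union> insert (j, r, v) P \<rbrakk> \<Longrightarrow>
     step n t F prp c
       (upd_loc (c\<lparr>net := net c - {(src, i, ((j, r, v), prf))}\<rparr>) i
          (s\<lparr>rcvd := insert (src, i, ((j, r, v), prf)) (rcvd s), auxv := A,
             expired := expired s \<union> forced_expired t A\<rparr>))"
| receive_invalid: "\<lbrakk> i < n; i \<notin> F; pc (loc c i) \<noteq> Init;
     (src, i, ((j, r, v), prf)) \<in> net c; \<not> is_valid n t r v prf; s = loc c i \<rbrakk> \<Longrightarrow>
     step n t F prp c
       (upd_loc (c\<lparr>net := net c - {(src, i, ((j, r, v), prf))}\<rparr>) i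
          (s\<lparr>rcvd := insert (src, i, ((j, r, v), prf)) (rcvd s),
             expired := expired s \<union> forced_expired t (auxv s)\<rparr>))"
| byzantine: "\<lbrakk> f \<in> F; d < n; finite prf;
     \<forall>(a, r, v) \<in> insert m prf. a < n \<and> (a \<in> F \<or> (a, r, v) \<in> known_sigs c) \<rbrakk> \<Longrightarrow>
     step n t F prp c (send c {(f, d, (m, prf))})"

definition reachable :: "nat \<Rightarrow> nat \<Rightarrow> nat set \<Rightarrow> (nat \<Rightarrow> bool) \<Rightarrow> config \<Rightarrow> bool" where
  "reachable n t F prp c = (step n t F prp)\<^sup>*\<^sup>* init_config c"

end

theory Submission
  imports Defs
begin

definition good :: "nat \<Rightarrow> nat set \<Rightarrow> (nat \<Rightarrow> bool) \<Rightarrow> bool \<Rightarrow> bool" where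
  "good n F prp v = (\<exists>k<n. k \<notin> F \<and> prp k = v)"

definition kinv :: "nat \<Rightarrow> nat set \<Rightarrow> (nat \<Rightarrow> bool) \<Rightarrow> smsg set \<Rightarrow> bool" where
  "kinv n F prp K = (\<forall>a r v. (a, r, v) \<in> K \<longrightarrow> a < n \<and>
      (a \<notin> F \<longrightarrow> (r = 0 \<longrightarrow> v = prp a) \<and> (0 < r \<longrightarrow> good n F prp v)))"

definition Inv :: "nat \<Rightarrow> nat set \<Rightarrow> (nat \<Rightarrow> bool) \<Rightarrow> config \<Rightarrow> bool" where
  "Inv n F prp c = (kinv n F prp (known_sigs c) \<and> net c \<subseteq> sent c \<and>
     (\<forall>i. auxv (loc c i) \<subseteq> known_sigs c) \<and>
     (\<forall>i. pc (loc c i) = Init \<or> pc (loc c i) = Loop \<or> 0 < rnd (loc c i)))"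

lemma ks_send: "known_sigs (send c ps) = known_sigs c \<union> (\<Union>(src, dst, m, P) \<in> ps. insert m P)"
  unfolding known_sigs_def send_def by auto

lemma ks_upd[simp]: "known_sigs (upd_loc c i s) = known_sigs c"
  unfolding known_sigs_def upd_loc_def by auto

lemma ks_net[simp]: "known_sigs (c\<lparr>net := X\<rparr>) = known_sigs c"
  unfolding known_sigs_def by auto

lemma ks_bcast: "known_sigs (send c (bcast_pkts n i r est prf)) \<subseteq> known_sigs c \<union> insert (i, r, est) prf"
  unfolding ks_send bcast_pkts_def by auto

lemma nonfaulty_signer:
  assumes "card (signers S r v) \<ge> t + 1" "finite F" "card F \<le> t"
  shows "\<exists>j. (j, r, v) \<in> S \<and> j \<notin> F"
proof (rule ccontr)
  assume "\<not> ?thesis"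
  then have "signers S r v \<subseteq> F" unfolding signers_def by auto
  then have "card (signers S r v) \<le> card F" using assms(2) by (simp add: card_mono)
  then show False using assms by simp
qed

lemma sig_good:
  assumes "kinv n F prp K" "(j, r, v) \<in> K" "j \<notin> F"
  shows "good n F prp v"
proof -
  have h: "j < n \<and> (j \<notin> F \<longrightarrow> (r = 0 \<longrightarrow> v = prp j) \<and> (0 < r \<longrightarrow> good n F prp v))"
    using assms(1,2) unfolding kinv_def by blast
  show ?thesis
  proof (cases "r = 0")
    case True
    then show ?thesis using h assms(3) unfolding good_def by auto
  next
    case False
    then show ?thesis using h assms(3) by simp
  qed
qed

lemma valid_good:
  assumes "kinv n F prp K" "is_valid n t r est prf" "0 < r" "prf \<subseteq> K"
    "3 * t < n" "finite F" "card F \<le> t"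
  shows "good n F prp est"
proof -
  have ex: "good n F prp v" if hh: "card (signers prf r' v) \<ge> t + 1" for r' v
  proof -
    obtain j where "(j, r', v) \<in> prf" "j \<notin> F" using nonfaulty_signer[OF hh assms(6,7)] by blast
    then show ?thesis using sig_good[OF assms(1)] assms(4) by blast
  qed
  have nt: "n - t \<ge> t + 1" using assms(5) by simp
  show ?thesis
  proof (cases "r = 1")
    case True
    then have "t + 1 \<le> card (signers prf 0 est)" using assms(2) unfolding is_valid_def by simp
    then show ?thesis by (rule ex)
  next
    case False
    show ?thesis
    proof (cases "est = bit_of (r - 1)")
      case True
      then have "(r = 2 \<and> t + 1 \<le> card (signers prf 0 est)) \<or> n - t \<le> card (signers prf (r - 2) est)"
        using assms(2,3) False unfolding is_valid_def Let_def by simp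
      then show ?thesis
      proof
        assume "r = 2 \<and> t + 1 \<le> card (signers prf 0 est)"
        then show ?thesis by (intro ex[of 0]) simp
      next
        assume "n - t \<le> card (signers prf (r - 2) est)"
        then show ?thesis by (intro ex[of "r - 2"]) (use nt in linarith)
      qed
    next
      case F2: False
      then have "n - t \<le> card (signers prf (r - 1) (\<not> bit_of (r - 1)))"
        using assms(2,3) False unfolding is_valid_def Let_def by simp
      moreover have "(\<not> bit_of (r - 1)) = est" using F2 by auto
      ultimately have "n - t \<le> card (signers prf (r - 1) est)" by simp
      then show ?thesis by (intro ex[of "r - 1"]) (use nt in linarith)
    qed
  qed
qed

lemma send_simps[simp]: "loc (send c ps) = loc c" "net (send c ps) = net c \<union> ps" "sent (send c ps) = sent c \<union> ps"
  by (simp_all add: send_def)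

lemma upd_simps[simp]: "loc (upd_loc c i s) = (loc c)(i := s)" "net (upd_loc c i s) = net c" "sent (upd_loc c i s) = sent c"
  by (simp_all add: upd_loc_def)

lemma ks_send_mono: "known_sigs c \<subseteq> known_sigs (send c ps)"
  unfolding ks_send by blast

lemma kinv_mono: "kinv n F prp K \<Longrightarrow> K' \<subseteq> K \<Longrightarrow> kinv n F prp K'"
  unfolding kinv_def by blast

lemma kinv_bcast:
  assumes "kinv n F prp K" "prf \<subseteq> K" "i < n" "i \<notin> F" "r = 0 \<longrightarrow> est = prp i"
    "0 < r \<longrightarrow> good n F prp est"
  shows "kinv n F prp (K \<union> insert (i, r, est) prf)"
  unfolding kinv_def
proof (intro allI impI)
  fix a r' v assume h: "(a, r', v) \<in> K \<union> insert (i, r, est) prf"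
  show "a < n \<and> (a \<notin> F \<longrightarrow> (r' = 0 \<longrightarrow> v = prp a) \<and> (0 < r' \<longrightarrow> good n F prp v))"
  proof (cases "(a, r', v) \<in> K")
    case True
    then show ?thesis using assms(1) unfolding kinv_def by blast
  next
    case False
    then have "(a, r', v) = (i, r, est)" using h assms(2) by blast
    then show ?thesis using assms(3-6) by simp
  qed
qed

lemma Inv_bcast:
  assumes "Inv n F prp c" "prf \<subseteq> known_sigs c" "i < n" "i \<notin> F" "r = 0 \<longrightarrow> est = prp i"
    "0 < r \<longrightarrow> good n F prp est"
    "pc s = Init \<or> pc s = Loop \<or> 0 < rnd s" "auxv s \<subseteq> known_sigs c"
  shows "Inv n F prp (send (upd_loc c i s) (bcast_pkts n i r est prf))"
proof -
  let ?c = "upd_loc c i s"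
  have k: "kinv n F prp (known_sigs (send ?c (bcast_pkts n i r est prf)))"
    apply (rule kinv_mono[OF _ ks_bcast])
    using kinv_bcast[of n F prp "known_sigs c" "prf" i r est] assms unfolding Inv_def by simp
  have m: "known_sigs c \<subseteq> known_sigs (send ?c (bcast_pkts n i r est prf))"
    using ks_send_mono[of ?c] by simp
  have a: "\<forall>j. auxv (loc (send ?c (bcast_pkts n i r est prf)) j) \<subseteq> known_sigs (send ?c (bcast_pkts n i r est prf))"
  proof
    fix j
    have "auxv (((loc c)(i := s)) j) \<subseteq> known_sigs c" using assms(1,8) unfolding Inv_def by simp
    then show "auxv (loc (send ?c (bcast_pkts n i r est prf)) j) \<subseteq> known_sigs (send ?c (bcast_pkts n i r est prf))"
      using m by simp
  qed
  have p: "\<forall>j. pc (((loc c)(i := s)) j) = Init \<or> pc (((loc c)(i := s)) j) = Loop \<or> 0 < rnd (((loc c)(i := s)) j)"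
    using assms(1,7) unfolding Inv_def by simp
  have nn: "net c \<subseteq> sent c" using assms(1) unfolding Inv_def by simp
  show ?thesis unfolding Inv_def using k a p nn by auto
qed

lemma Inv_upd:
  assumes "Inv n F prp c" "pc s = Init \<or> pc s = Loop \<or> 0 < rnd s" "auxv s \<subseteq> known_sigs c"
  shows "Inv n F prp (upd_loc c i s)"
  using assms unfolding Inv_def by auto

lemma Inv_facts:
  assumes "Inv n F prp c"
  shows "kinv n F prp (known_sigs c)" "net c \<subseteq> sent c" "auxv (loc c i) \<subseteq> known_sigs c"
    "pc (loc c i) = Init \<or> pc (loc c i) = Loop \<or> 0 < rnd (loc c i)"
  using assms unfolding Inv_def by auto

lemma Inv_recv:
  assumes "Inv n F prp c" "pkt \<in> net c" "pc s = Init \<or> pc s = Loop \<or> 0 < rnd s" "auxv s \<subseteq> known_sigs c"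
  shows "Inv n F prp (upd_loc (c\<lparr>net := net c - {pkt}\<rparr>) i s)"
proof -
  have e: "known_sigs (upd_loc (c\<lparr>net := net c - {pkt}\<rparr>) i s) = known_sigs c" by simp
  have p: "\<forall>j. pc (((loc c)(i := s)) j) = Init \<or> pc (((loc c)(i := s)) j) = Loop \<or> 0 < rnd (((loc c)(i := s)) j)"
    using assms(1,3) unfolding Inv_def by simp
  have a: "\<forall>j. auxv (((loc c)(i := s)) j) \<subseteq> known_sigs c"
    using assms(1,4) unfolding Inv_def by simp
  have nn: "net c \<subseteq> sent c" using assms(1) unfolding Inv_def by simp
  have k: "kinv n F prp (known_sigs c)" using assms(1) unfolding Inv_def by simp
  show ?thesis unfolding Inv_def e using p a nn k by auto
qed

lemma Inv_byz:
  assumes "Inv n F prp c" "\<forall>(a, r, v) \<in> insert m P. a < n \<and> (a \<in> F \<or> (a, r, v) \<in> known_sigs c)"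
  shows "Inv n F prp (send c {(f, d, (m, P))})"
proof -
  have e: "known_sigs (send c {(f, d, (m, P))}) = known_sigs c \<union> insert m P"
    unfolding ks_send by simp
  have k0: "kinv n F prp (known_sigs c)" using assms(1) unfolding Inv_def by simp
  have k: "kinv n F prp (known_sigs c \<union> insert m P)"
    unfolding kinv_def
  proof (intro allI impI)
    fix a r v assume h: "(a, r, v) \<in> known_sigs c \<union> insert m P"
    show "a < n \<and> (a \<notin> F \<longrightarrow> (r = 0 \<longrightarrow> v = prp a) \<and> (0 < r \<longrightarrow> good n F prp v))"
    proof (cases "(a, r, v) \<in> known_sigs c")
      case True
      then show ?thesis using k0 unfolding kinv_def by blast
    next
      case False
      then have "(a, r, v) \<in> insert m P" using h by blast
      then have "a < n \<and> (a \<in> F \<or> (a, r, v) \<in> known_sigs c)" using assms(2) by blast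
      then show ?thesis using False by blast
    qed
  qed
  have a: "\<forall>j. auxv (loc c j) \<subseteq> known_sigs c" using assms(1) unfolding Inv_def by simp
  have p: "\<forall>j. pc (loc c j) = Init \<or> pc (loc c j) = Loop \<or> 0 < rnd (loc c j)"
    using assms(1) unfolding Inv_def by simp
  have nn: "net c \<subseteq> sent c" using assms(1) unfolding Inv_def by simp
  show ?thesis unfolding Inv_def e using k a p nn by auto
qed

lemma step_inv:
  assumes "step n t F prp c c'" "Inv n F prp c" "3 * t < n" "finite F" "card F \<le> t"
  shows "Inv n F prp c'"
  using assms(1)
proof cases
  case (init_step i)
  show ?thesis unfolding init_step(1)
    by (rule Inv_bcast[OF assms(2)]) (use init_step(2,3) in simp_all)
next
  case (loop_coord i s1 est pf)
  note I = Inv_facts[OF assms(2)]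
  have bo: "is_valid n t (rnd s1) est pf" "pf \<subseteq> auxv s1" using loop_coord(7) unfolding bcast_ok_def by blast+
  have pk: "pf \<subseteq> known_sigs c" using bo(2) I(3)[of i] loop_coord(5) by simp
  have r: "0 < rnd s1" using loop_coord(5) by simp
  have g: "good n F prp est" by (rule valid_good[OF I(1) bo(1) r pk assms(3-5)])
  show ?thesis unfolding loop_coord(1)
    by (rule Inv_bcast[OF assms(2) pk]) (use loop_coord(2,3,5) g r I(3)[of i] in simp_all)
next
  case (loop_other i s1)
  note I = Inv_facts[OF assms(2)]
  show ?thesis unfolding loop_other(1)
    by (rule Inv_upd[OF assms(2)]) (use loop_other(5) I(3)[of i] in simp_all)
next
  case (wait1_coord i)
  note I = Inv_facts[OF assms(2)]
  show ?thesis unfolding wait1_coord(1)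
    by (rule Inv_upd[OF assms(2)]) (use wait1_coord(4) I(3)[of i] I(4)[of i] in simp_all)
next
  case (wait1_other i est pf)
  note I = Inv_facts[OF assms(2)]
  have r: "0 < rnd (loc c i)" using I(4)[of i] wait1_other(4) by auto
  have bo: "is_valid n t (rnd (loc c i)) est pf" "pf \<subseteq> auxv (loc c i)" using wait1_other(7) unfolding bcast_ok_def by blast+
  have pk: "pf \<subseteq> known_sigs c" using bo(2) I(3)[of i] by simp
  have g: "good n F prp est" by (rule valid_good[OF I(1) bo(1) r pk assms(3-5)])
  show ?thesis unfolding wait1_other(1)
    by (rule Inv_bcast[OF assms(2) pk]) (use wait1_other(2,3) g r I(3)[of i] in simp_all)
next
  case (wait2 i)
  note I = Inv_facts[OF assms(2)]
  show ?thesis unfolding wait2(1)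
    by (rule Inv_upd[OF assms(2)]) (use wait2(4) I(3)[of i] I(4)[of i] in simp_all)
next
  case (wait3 i s b)
  note I = Inv_facts[OF assms(2)]
  show ?thesis unfolding wait3(1)
    by (rule Inv_upd[OF assms(2)]) (use wait3(6) I(3)[of i] I(4)[of i] in simp_all)
next
  case (timer_expire i k)
  note I = Inv_facts[OF assms(2)]
  show ?thesis unfolding timer_expire(1)
    by (rule Inv_upd[OF assms(2)]) (use I(3)[of i] I(4)[of i] in simp_all)
next
  case (receive_valid i src j r v pf P s A)
  note I = Inv_facts[OF assms(2)]
  have "(src, i, ((j, r, v), pf)) \<in> sent c" using receive_valid(5) I(2) by blast
  then have "insert (j, r, v) P \<subseteq> known_sigs c" using receive_valid(7) unfolding known_sigs_def by blast
  then have "A \<subseteq> known_sigs c" using receive_valid(9,10) I(3)[of i] by auto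
  then show ?thesis unfolding receive_valid(1)
    by (intro Inv_recv[OF assms(2) receive_valid(5)]) (use receive_valid(9) I(4)[of i] in simp_all)
next
  case (receive_invalid i src j r v pf s)
  note I = Inv_facts[OF assms(2)]
  show ?thesis unfolding receive_invalid(1)
    by (intro Inv_recv[OF assms(2) receive_invalid(5)]) (use receive_invalid(7) I(3)[of i] I(4)[of i] in simp_all)
next
  case (byzantine f d pf m)
  show ?thesis unfolding byzantine(1) by (rule Inv_byz[OF assms(2) byzantine(5)])
qed

lemma reach_inv:
  assumes "reachable n t F prp c" "3 * t < n" "finite F" "card F \<le> t"
  shows "Inv n F prp c"
proof -
  have "(step n t F prp)\<^sup>*\<^sup>* init_config c" using assms(1) unfolding reachable_def .
  then show ?thesis
  proof induction
    case base
    show ?case unfolding Inv_def kinv_def init_config_def init_lstate_def known_sigs_def by auto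
  next
    case (step y z)
    then show ?case using step_inv assms by blast
  qed
qed

theorem lemma2:
  fixes n t :: nat and F :: "nat set" and prp :: "nat \<Rightarrow> bool" and c :: config
  assumes "3 * t < n"
    and "F \<subseteq> {..<n}" and "card F \<le> t"
    and "reachable n t F prp c"
    and "(j, r, v) \<in> known_sigs c" and "j < n" and "j \<notin> F" and "r > 0"
  shows "\<exists>k < n. k \<notin> F \<and> prp k = v"
proof -
  have "finite F" using assms(2) finite_subset by blast
  then have "Inv n F prp c" using reach_inv assms by blast
  then show ?thesis using assms unfolding Inv_def kinv_def good_def by blast
qed

end
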